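(* For every $1\le t\le m$ there exists a deterministic voting rule taking top-$t$ preference profiles as input that has metric distortion $O(m-t+1)$ and utilitarian distortion $O(m^2)$.
   Context: Setting: $n$ agents, $m$ alternatives; each agent has an underlying strict ranking, but the rule only receives each agent's ordered list of her top $t$ alternatives (a top-$t$ profile $\vec\sigma_t$). A full profile extends $\vec\sigma_t$ if each agent's top-$t$ prefix coincides with that in $\vec\sigma_t$. Metric framework: a pseudometric $d$ on agents and alternatives is consistent with a full profile $\vec\sigma$ if $X\succ_iY\Rightarrow d(i,X)\le d(i,Y)$, and consistent with $\vec\sigma_t$ if it is consistent with some full profile extending $\vec\sigma_t$. $\mathrm{SC}(X,d)=\sum_id(i,X)$. Metric distortion of a (top-$t$) rule $f$: $\sup_{\vec\sigma_t}\sup_{d}\mathbb E_{X\sim f(\vec\sigma_t)}[\mathrm{SC}(X,d)]/\min_X\mathrm{SC}(X,d)$ over consistent $d$. Utilitarian framework: unit-sum nonnegative utilities $u_i$ ($\sum_Xu_i(X)=1$), consistent with a full profile if $X\succ_iY\Rightarrow u_i(X)\ge u_i(Y)$ and with $\vec\sigma_t$ if consistent with some full extension. $\mathrm{SW}(X,\vec u)=\sum_iu_i(X)$. Utilitarian distortion: $\sup_{\vec\sigma_t}\sup_{\vec u}\max_X\mathrm{SW}(X,\vec u)/\mathbb E_{X\sim f(\vec\sigma_t)}[\mathrm{SW}(X,\vec u)]$. *)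

theory Defs
  imports Complex_Main "HOL-Library.Extended_Real"
begin

text \<open>Alternatives are 0..<m, agents are 0..<n (list positions). A ranking (full or top-t)
is a list of alternatives, most preferred first. A profile is a nonempty list of rankings.\<close>

definition is_ranking :: "nat \<Rightarrow> nat list \<Rightarrow> bool" where
  "is_ranking m r \<longleftrightarrow> distinct r \<and> set r = {..<m}"

definition is_top_list :: "nat \<Rightarrow> nat \<Rightarrow> nat list \<Rightarrow> bool" where
  "is_top_list m t r \<longleftrightarrow> distinct r \<and> length r = t \<and> set r \<subseteq> {..<m}"

definition full_profile :: "nat \<Rightarrow> nat list list \<Rightarrow> bool" where
  "full_profile m P \<longleftrightarrow> P \<noteq> [] \<and> (\<forall>r\<in>set P. is_ranking m r)"

definition top_profile :: "nat \<Rightarrow> nat \<Rightarrow> nat list list \<Rightarrow> bool" where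
  "top_profile m t P \<longleftrightarrow> P \<noteq> [] \<and> (\<forall>r\<in>set P. is_top_list m t r)"

definition extends_top :: "nat \<Rightarrow> nat list list \<Rightarrow> nat list list \<Rightarrow> bool" where
  "extends_top t Pf P \<longleftrightarrow> length Pf = length P \<and> (\<forall>i<length P. take t (Pf ! i) = P ! i)"

definition prefers :: "nat list \<Rightarrow> nat \<Rightarrow> nat \<Rightarrow> bool" where
  "prefers r X Y \<longleftrightarrow> (\<exists>i j. i < j \<and> j < length r \<and> r ! i = X \<and> r ! j = Y)"

definition voting_rule :: "nat \<Rightarrow> nat \<Rightarrow> (nat list list \<Rightarrow> nat) \<Rightarrow> bool" where
  "voting_rule m t f \<longleftrightarrow> (\<forall>P. top_profile m t P \<longrightarrow> f P < m)"

text \<open>Points: agents Inl i (i<n), alternatives Inr X (X<m).\<close>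
definition points :: "nat \<Rightarrow> nat \<Rightarrow> (nat + nat) set" where
  "points n m = Inl ` {..<n} \<union> Inr ` {..<m}"

definition pseudometric_on :: "(nat + nat) set \<Rightarrow> ((nat + nat) \<Rightarrow> (nat + nat) \<Rightarrow> real) \<Rightarrow> bool" where
  "pseudometric_on S d \<longleftrightarrow>
     (\<forall>x\<in>S. d x x = 0) \<and>
     (\<forall>x\<in>S. \<forall>y\<in>S. 0 \<le> d x y \<and> d x y = d y x) \<and>
     (\<forall>x\<in>S. \<forall>y\<in>S. \<forall>z\<in>S. d x z \<le> d x y + d y z)"

definition metric_consistent_full :: "nat list list \<Rightarrow> ((nat + nat) \<Rightarrow> (nat + nat) \<Rightarrow> real) \<Rightarrow> bool" where
  "metric_consistent_full P d \<longleftrightarrow>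
     (\<forall>i<length P. \<forall>X Y. prefers (P ! i) X Y \<longrightarrow> d (Inl i) (Inr X) \<le> d (Inl i) (Inr Y))"

definition metric_consistent_top :: "nat \<Rightarrow> nat \<Rightarrow> nat list list \<Rightarrow> ((nat + nat) \<Rightarrow> (nat + nat) \<Rightarrow> real) \<Rightarrow> bool" where
  "metric_consistent_top m t P d \<longleftrightarrow>
     (\<exists>Pf. full_profile m Pf \<and> extends_top t Pf P \<and> metric_consistent_full Pf d)"

definition SC :: "nat \<Rightarrow> ((nat + nat) \<Rightarrow> (nat + nat) \<Rightarrow> real) \<Rightarrow> nat \<Rightarrow> real" where
  "SC n d X = (\<Sum>i<n. d (Inl i) (Inr X))"

text \<open>Metric distortion of a deterministic top-t rule (ratio in ereal: a/0 = \<infinity> for a>0, 0/0 = 0).\<close>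
definition metric_distortion :: "nat \<Rightarrow> nat \<Rightarrow> (nat list list \<Rightarrow> nat) \<Rightarrow> ereal" where
  "metric_distortion m t f =
     (SUP Pd \<in> {(P, d). top_profile m t P \<and> pseudometric_on (points (length P) m) d
                        \<and> metric_consistent_top m t P d}.
        ereal (SC (length (fst Pd)) (snd Pd) (f (fst Pd)))
        / ereal (Min ((\<lambda>X. SC (length (fst Pd)) (snd Pd) X) ` {..<m})))"

definition unit_sum_utils :: "nat \<Rightarrow> nat \<Rightarrow> (nat \<Rightarrow> nat \<Rightarrow> real) \<Rightarrow> bool" where
  "unit_sum_utils n m u \<longleftrightarrow> (\<forall>i<n. (\<forall>X<m. 0 \<le> u i X) \<and> (\<Sum>X<m. u i X) = 1)"

definition util_consistent_full :: "nat list list \<Rightarrow> (nat \<Rightarrow> nat \<Rightarrow> real) \<Rightarrow> bool" where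
  "util_consistent_full P u \<longleftrightarrow>
     (\<forall>i<length P. \<forall>X Y. prefers (P ! i) X Y \<longrightarrow> u i X \<ge> u i Y)"

definition util_consistent_top :: "nat \<Rightarrow> nat \<Rightarrow> nat list list \<Rightarrow> (nat \<Rightarrow> nat \<Rightarrow> real) \<Rightarrow> bool" where
  "util_consistent_top m t P u \<longleftrightarrow>
     (\<exists>Pf. full_profile m Pf \<and> extends_top t Pf P \<and> util_consistent_full Pf u)"

definition SW :: "nat \<Rightarrow> (nat \<Rightarrow> nat \<Rightarrow> real) \<Rightarrow> nat \<Rightarrow> real" where
  "SW n u X = (\<Sum>i<n. u i X)"

definition util_distortion :: "nat \<Rightarrow> nat \<Rightarrow> (nat list list \<Rightarrow> nat) \<Rightarrow> ereal" where
  "util_distortion m t f =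
     (SUP Pu \<in> {(P, u). top_profile m t P \<and> unit_sum_utils (length P) m u
                        \<and> util_consistent_top m t P u}.
        ereal (Max ((\<lambda>X. SW (length (fst Pu)) (snd Pu) X) ` {..<m}))
        / ereal (SW (length (fst Pu)) (snd Pu) (f (fst Pu))))"

end

theory Submission
  imports Defs
begin

definition topc :: "nat list list \<Rightarrow> nat \<Rightarrow> nat" where
  "topc P c = (\<Sum>j<length P. if hd (P!j) = c then 1 else 0)"

definition inH :: "nat \<Rightarrow> nat list list \<Rightarrow> nat \<Rightarrow> bool" where
  "inH m P c \<longleftrightarrow> c < m \<and> length P \<le> 2*m*topc P c"

definition sc0 :: "nat \<Rightarrow> nat \<Rightarrow> nat list list \<Rightarrow> nat \<Rightarrow> nat" where
  "sc0 m t P c = (if inH m P c then 2*(m-t+1)*topc P c else 0)"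

definition remQ :: "nat \<Rightarrow> nat list \<Rightarrow> (nat \<Rightarrow> nat) \<Rightarrow> nat set" where
  "remQ m r s = {c. c<m \<and> 0 < s c \<and> c \<notin> set r}"

definition remset :: "nat \<Rightarrow> nat list \<Rightarrow> (nat \<Rightarrow> nat) \<Rightarrow> nat set" where
  "remset m r s = (if remQ m r s \<noteq> {} then remQ m r s
     else if (\<exists>j<length r. 0 < s (r!j)) then {r ! (GREATEST j. j < length r \<and> 0 < s (r!j))} else {})"

definition vstep :: "nat \<Rightarrow> nat list \<Rightarrow> (nat \<Rightarrow> nat) \<Rightarrow> nat \<Rightarrow> nat" where
  "vstep m r s = (\<lambda>c. if c \<in> remset m r s then s c - 1 else s c)"

primrec scores :: "nat \<Rightarrow> nat \<Rightarrow> nat list list \<Rightarrow> nat \<Rightarrow> nat \<Rightarrow> nat" where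
  "scores m t P 0 = sc0 m t P"
| "scores m t P (Suc v) = vstep m (P!v) (scores m t P v)"

definition rule :: "nat \<Rightarrow> nat \<Rightarrow> nat list list \<Rightarrow> nat" where
  "rule m t P = (LEAST c. 0 < scores m t P (length P) c)"

lemma remset_sub:
  assumes "set r \<subseteq> {..<m}"
  shows "remset m r s \<subseteq> {c. c<m \<and> 0 < s c}"
proof -
  have "r ! (GREATEST j. j < length r \<and> 0 < s (r!j)) \<in> {c. c<m \<and> 0 < s c}"
    if ex: "\<exists>j<length r. 0 < s (r!j)"
  proof -
    from ex obtain j where j: "j < length r \<and> 0 < s (r!j)" by blast
    let ?g = "GREATEST j. j < length r \<and> 0 < s (r!j)"
    have "?g < length r \<and> 0 < s (r!?g)"
      using GreatestI_nat[of "\<lambda>j. j < length r \<and> 0 < s (r!j)" j "length r"] j by auto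
    then show ?thesis using assms nth_mem by fastforce
  qed
  then show ?thesis unfolding remset_def remQ_def by auto
qed

lemma remset_card:
  assumes "distinct r" "length r = t" "set r \<subseteq> {..<m}" "t \<le> m"
  shows "card (remset m r s) \<le> m - t + 1"
proof -
  have "remQ m r s \<subseteq> {..<m} - set r" unfolding remQ_def by auto
  then have "card (remQ m r s) \<le> card ({..<m} - set r)" by (intro card_mono) auto
  also have "\<dots> = m - t" using assms by (simp add: card_Diff_subset distinct_card)
  finally show ?thesis unfolding remset_def by auto
qed

lemma vstep_le: "vstep m r s c \<le> s c" unfolding vstep_def by auto

lemma scores_mono: "scores m t P (v + d) c \<le> scores m t P v c"
  by (induction d) (auto intro: order_trans[OF vstep_le])


lemma pref_out:
  assumes "is_ranking m \<sigma>" "take t \<sigma> = r" "X \<in> set r" "Y < m" "Y \<notin> set r"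
  shows "prefers \<sigma> X Y"
proof -
  have lt: "length r \<le> t" using assms(2) by auto
  obtain p where p: "p < length r" "r!p = X" using assms(3) by (auto simp: in_set_conv_nth)
  have "Y \<in> set \<sigma>" using assms(1,4) unfolding is_ranking_def by auto
  then obtain q where q: "q < length \<sigma>" "\<sigma>!q = Y" by (auto simp: in_set_conv_nth)
  have "\<not> q < length r"
  proof
    assume "q < length r"
    then have "r!q = Y" using assms(2) q by auto
    then show False using \<open>q < length r\<close> assms(5) by auto
  qed
  moreover have "\<sigma>!p = X" using assms(2) p by auto
  ultimately show ?thesis unfolding prefers_def using p q by (intro exI[of _ p] exI[of _ q]) auto
qed

lemma pref_idx:
  assumes "take t \<sigma> = r" "p < q" "q < length r"
  shows "prefers \<sigma> (r!p) (r!q)"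
proof -
  have "q < length \<sigma>" using assms by auto
  then show ?thesis unfolding prefers_def using assms by (intro exI[of _ p] exI[of _ q]) auto
qed

lemma pref_top:
  assumes "is_ranking m \<sigma>" "take t \<sigma> = r" "r \<noteq> []" "Y < m" "Y \<noteq> hd r"
  shows "prefers \<sigma> (hd r) Y"
proof -
  have "Y \<in> set \<sigma>" using assms(1,4) unfolding is_ranking_def by auto
  then obtain q where q: "q < length \<sigma>" "\<sigma>!q = Y" by (auto simp: in_set_conv_nth)
  have r0: "hd r = \<sigma>!0" using assms(2,3) by (auto simp: hd_conv_nth)
  have "q \<noteq> 0"
  proof
    assume "q = 0"
    then show False using q assms(5) r0 by simp
  qed
  then have "0 < q" by simp
  then show ?thesis unfolding prefers_def using q r0 by (intro exI[of _ 0] exI[of _ q]) simp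
qed


context
  fixes m t :: nat and P :: "nat list list"
  assumes tp: "top_profile m t P" and t1: "1 \<le> t" and tm: "t \<le> m"
begin

abbreviation "S \<equiv> scores m t P"
abbreviation "R v \<equiv> remset m (P!v) (S v)"

lemma row: "v < length P \<Longrightarrow> distinct (P!v) \<and> length (P!v) = t \<and> set (P!v) \<subseteq> {..<m}"
  using tp unfolding top_profile_def is_top_list_def by auto

lemma R_sub: "v < length P \<Longrightarrow> R v \<subseteq> {c. c<m \<and> 0 < S v c}"
  using remset_sub row by blast

lemma R_card: "v < length P \<Longrightarrow> card (R v) \<le> m - t + 1"
  using remset_card row tm by blast

lemma inv: "v \<le> length P \<Longrightarrow> S v c + (\<Sum>u<v. if c \<in> R u then 1 else 0) = sc0 m t P c"
proof (induction v)
  case 0 then show ?case by simp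
next
  case (Suc v)
  then have IH: "S v c + (\<Sum>u<v. if c \<in> R u then 1 else 0) = sc0 m t P c" by simp
  have vl: "v < length P" using Suc.prems by simp
  show ?case
  proof (cases "c \<in> R v")
    case True
    then have "0 < S v c" using R_sub[OF vl] by auto
    then show ?thesis using IH True by (simp add: vstep_def)
  next
    case False
    then show ?thesis using IH by (simp add: vstep_def)
  qed
qed

lemma S_le_sc0: "v \<le> length P \<Longrightarrow> S v c \<le> sc0 m t P c"
  using inv[of v c] by linarith

lemma cnt_le: "(\<Sum>u<length P. if c \<in> R u then 1 else 0) \<le> sc0 m t P c"
  using inv[of "length P" c] by linarith

lemma total: "(\<Sum>c<m. S (length P) c) + (\<Sum>u<length P. card (R u)) = (\<Sum>c<m. sc0 m t P c)"
proof -
  have "(\<Sum>c<m. sc0 m t P c) = (\<Sum>c<m. S (length P) c + (\<Sum>u<length P. if c \<in> R u then 1 else 0))"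
    using inv by simp
  also have "\<dots> = (\<Sum>c<m. S (length P) c) + (\<Sum>c<m. \<Sum>u<length P. if c \<in> R u then 1 else 0)"
    by (simp add: sum.distrib)
  also have "(\<Sum>c<m. \<Sum>u<length P. if c \<in> R u then 1 else 0) = (\<Sum>u<length P. \<Sum>c<m. if c \<in> R u then 1 else 0)"
    by (rule sum.swap)
  also have "\<dots> = (\<Sum>u<length P. card (R u))"
  proof (rule sum.cong[OF refl])
    fix u assume "u \<in> {..<length P}"
    then have "R u \<subseteq> {..<m}" using R_sub by auto
    then have "{..<m} \<inter> R u = R u" by blast
    then show "(\<Sum>c<m. if c \<in> R u then 1 else 0) = card (R u)"
      by (simp add: sum.If_cases)
  qed
  finally show ?thesis by simp
qed


lemma hd_row: "j < length P \<Longrightarrow> hd (P!j) < m \<and> hd (P!j) = P!j!0"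
proof -
  assume j: "j < length P"
  then have "P!j \<noteq> []" using row[OF j] t1 by auto
  then show ?thesis using row[OF j] hd_in_set[of "P!j"] by (auto simp: hd_conv_nth)
qed

lemma sum_topc_real: "(\<Sum>c<m. real (topc P c) * x c) = (\<Sum>j<length P. x (hd (P!j)))"
proof -
  have "(\<Sum>c<m. real (topc P c) * x c) = (\<Sum>c<m. \<Sum>j<length P. if hd (P!j) = c then x c else 0)"
    unfolding topc_def by (auto simp add: sum_distrib_right intro!: sum.cong)
  also have "\<dots> = (\<Sum>j<length P. \<Sum>c<m. if hd (P!j) = c then x c else 0)" by (rule sum.swap)
  also have "\<dots> = (\<Sum>j<length P. x (hd (P!j)))"
  proof (rule sum.cong[OF refl])
    fix j assume "j \<in> {..<length P}"
    then have "hd (P!j) < m" using hd_row[of j] by blast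
    then show "(\<Sum>c<m. if hd (P!j) = c then x c else 0) = x (hd (P!j))"
      by (simp add: sum.delta)
  qed
  finally show ?thesis .
qed

lemma sum_topc: "(\<Sum>c<m. topc P c) = length P"
proof -
  have "real (\<Sum>c<m. topc P c) = (\<Sum>c<m. real (topc P c) * 1)" by simp
  also have "\<dots> = real (length P)" using sum_topc_real[of "\<lambda>_. 1"] by simp
  finally show ?thesis by linarith
qed

lemma n_pos: "0 < length P" using tp unfolding top_profile_def by auto

lemma sum_sc0: "(m-t+1) * (length P + 1) \<le> (\<Sum>c<m. sc0 m t P c)"
proof -
  let ?n = "length P"
  let ?X = "\<Sum>c<m. if inH m P c then 0 else topc P c"
  let ?Y = "\<Sum>c<m. if inH m P c then topc P c else 0"
  have "?X + ?Y = (\<Sum>c<m. topc P c)" by (auto simp add: sum.distrib[symmetric] intro!: sum.cong)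
  then have XY: "?X + ?Y = ?n" using sum_topc by simp
  have "2*m*?X = (\<Sum>c<m. if inH m P c then 0 else 2*m*topc P c)"
    by (simp add: sum_distrib_left if_distrib cong: if_cong)
  also have "\<dots> \<le> (\<Sum>c<m. ?n - 1)"
  proof (rule sum_mono)
    fix c assume c: "c \<in> {..<m}"
    show "(if inH m P c then 0 else 2*m*topc P c) \<le> ?n - 1"
      using c unfolding inH_def by auto
  qed
  also have "\<dots> = m * (?n - 1)" by simp
  finally have "m * (2 * ?X) \<le> m * (?n - 1)" by (simp add: mult.assoc mult.left_commute)
  then have "2 * ?X \<le> ?n - 1" using tm t1 by simp
  then have Y: "?n + 1 \<le> 2 * ?Y" using XY n_pos by linarith
  have eq: "(\<Sum>c<m. sc0 m t P c) = (m-t+1) * (2 * ?Y)"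
    unfolding sc0_def by (auto simp add: sum_distrib_left intro!: sum.cong)
  have "(m-t+1)*(?n+1) \<le> (m-t+1) * (2 * ?Y)" by (rule mult_le_mono2[OF Y])
  then show ?thesis by (simp only: eq)
qed


lemma final_pos: "\<exists>c<m. 0 < S (length P) c"
proof (rule ccontr)
  assume "\<not> ?thesis"
  then have z: "(\<Sum>c<m. S (length P) c) = 0" by simp
  have "(\<Sum>u<length P. card (R u)) \<le> (\<Sum>u<length P. m - t + 1)"
    using R_card by (intro sum_mono) auto
  then have "(\<Sum>u<length P. card (R u)) \<le> (m-t+1) * length P" by (simp add: mult.commute)
  then have "(\<Sum>c<m. sc0 m t P c) \<le> (m-t+1) * length P" using total z by simp
  then show False using sum_sc0 by (simp add: algebra_simps)
qed

definition "A \<equiv> rule m t P"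

lemma A_pos: "0 < S (length P) A" and A_lt: "A < m"
proof -
  obtain c where c: "c < m" "0 < S (length P) c" using final_pos by blast
  show "0 < S (length P) A" unfolding A_def rule_def by (rule LeastI[of _ c]) (use c in auto)
  have "A \<le> c" unfolding A_def rule_def by (rule Least_le) (use c in auto)
  then show "A < m" using c by simp
qed

lemma A_posv: "v \<le> length P \<Longrightarrow> 0 < S v A"
  using A_pos scores_mono[of m t P v "length P - v" A] by simp

lemma A_H: "inH m P A"
  using S_le_sc0[of "length P" A] A_pos unfolding sc0_def by (auto split: if_splits)



context
  fixes Pf :: "nat list list" and d :: "nat + nat \<Rightarrow> nat + nat \<Rightarrow> real"
  assumes pm: "pseudometric_on (points (length P) m) d"
    and fp: "full_profile m Pf" and ext: "extends_top t Pf P"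
    and cons: "metric_consistent_full Pf d"
begin

lemma pt_l: "v < length P \<Longrightarrow> Inl v \<in> points (length P) m" unfolding points_def by auto
lemma pt_r: "c < m \<Longrightarrow> Inr c \<in> points (length P) m" unfolding points_def by auto

lemma dnn: "x \<in> points (length P) m \<Longrightarrow> y \<in> points (length P) m \<Longrightarrow> 0 \<le> d x y"
  using pm unfolding pseudometric_on_def by blast
lemma dsym: "x \<in> points (length P) m \<Longrightarrow> y \<in> points (length P) m \<Longrightarrow> d x y = d y x"
  using pm unfolding pseudometric_on_def by blast
lemma dtri: "x \<in> points (length P) m \<Longrightarrow> y \<in> points (length P) m \<Longrightarrow> z \<in> points (length P) m
   \<Longrightarrow> d x z \<le> d x y + d y z"
  using pm unfolding pseudometric_on_def by blast

lemma Pf_facts: "v < length P \<Longrightarrow> v < length Pf \<and> take t (Pf!v) = P!v \<and> is_ranking m (Pf!v)"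
  using fp ext unfolding full_profile_def extends_top_def by auto

lemma consv: "v < length P \<Longrightarrow> prefers (Pf!v) X Y \<Longrightarrow> d (Inl v) (Inr X) \<le> d (Inl v) (Inr Y)"
  using cons Pf_facts unfolding metric_consistent_full_def by blast

lemma agent_bound:
  assumes v: "v < length P"
  shows "d (Inl v) (Inr A) \<le> (\<Sum>c\<in>R v. d (Inl v) (Inr c))"
proof -
  let ?r = "P!v" and ?s = "S v"
  have sA: "0 < ?s A" using A_posv v by simp
  have Am: "A < m" by (rule A_lt)
  have pf: "take t (Pf!v) = ?r" "is_ranking m (Pf!v)" using Pf_facts[OF v] by auto
  have fin: "finite (R v)" using R_sub[OF v] by (rule finite_subset) auto
  have nn: "\<And>c. c \<in> R v \<Longrightarrow> 0 \<le> d (Inl v) (Inr c)"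
    using R_sub[OF v] dnn pt_l[OF v] pt_r by blast
  have single: "d (Inl v) (Inr A) \<le> (\<Sum>c\<in>R v. d (Inl v) (Inr c))"
    if c: "c \<in> R v" and le: "d (Inl v) (Inr A) \<le> d (Inl v) (Inr c)" for c
  proof -
    have "d (Inl v) (Inr c) \<le> (\<Sum>c\<in>R v. d (Inl v) (Inr c))"
      by (rule member_le_sum[OF c nn fin]) simp
    then show ?thesis using le by linarith
  qed
  show ?thesis
  proof (cases "remQ m ?r ?s \<noteq> {}")
    case True
    then have Rv: "R v = remQ m ?r ?s" unfolding remset_def by simp
    show ?thesis
    proof (cases "A \<in> remQ m ?r ?s")
      case True
      then show ?thesis using single[of A] Rv by simp
    next
      case False
      then have Ar: "A \<in> set ?r" using Am sA unfolding remQ_def by auto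
      obtain c where c: "c \<in> remQ m ?r ?s" using \<open>remQ m ?r ?s \<noteq> {}\<close> by blast
      then have "c < m" "c \<notin> set ?r" unfolding remQ_def by auto
      then have "prefers (Pf!v) A c" using pref_out[OF pf(2) pf(1) Ar] by blast
      then show ?thesis using single[of c] c Rv consv[OF v] by simp
    qed
  next
    case False
    then have Ar: "A \<in> set ?r" using Am sA unfolding remQ_def by auto
    then obtain p where p: "p < length ?r" "?r!p = A" by (auto simp: in_set_conv_nth)
    let ?Q = "\<lambda>j. j < length ?r \<and> 0 < ?s (?r!j)"
    let ?g = "GREATEST j. ?Q j"
    have Qp: "?Q p" using p sA by simp
    have ex: "\<exists>j<length ?r. 0 < ?s (?r!j)" using Qp by blast
    have Rv: "R v = {?r ! ?g}" using False ex unfolding remset_def by simp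
    have pg: "p \<le> ?g" by (rule Greatest_le_nat[of ?Q p "length ?r"]) (use Qp in auto)
    have gl: "?g < length ?r" using GreatestI_nat[of ?Q p "length ?r"] Qp by auto
    show ?thesis
    proof (cases "p = ?g")
      case True
      then show ?thesis using single[of A] Rv p by simp
    next
      case False
      then have "p < ?g" using pg by simp
      then have "prefers (Pf!v) (?r!p) (?r!?g)" using pref_idx[OF pf(1) _ gl] by blast
      then show ?thesis using single[of "?r!?g"] Rv p consv[OF v] by simp
    qed
  qed
qed


lemma top_close:
  assumes j: "j < length P" and B: "B < m"
  shows "d (Inr B) (Inr (hd (P!j))) \<le> 2 * d (Inl j) (Inr B)"
proof -
  let ?T = "hd (P!j)"
  have Tm: "?T < m" using hd_row[OF j] by simp
  have ne: "P!j \<noteq> []" using row[OF j] t1 by auto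
  have pf: "take t (Pf!j) = P!j" "is_ranking m (Pf!j)" using Pf_facts[OF j] by auto
  have jT: "d (Inl j) (Inr ?T) \<le> d (Inl j) (Inr B)"
  proof (cases "B = ?T")
    case True then show ?thesis by simp
  next
    case False
    then have "prefers (Pf!j) ?T B" using pref_top[OF pf(2) pf(1) ne B] by simp
    then show ?thesis using consv[OF j] by blast
  qed
  have "d (Inr B) (Inr ?T) \<le> d (Inr B) (Inl j) + d (Inl j) (Inr ?T)"
    using dtri pt_l[OF j] pt_r[OF B] pt_r[OF Tm] by blast
  also have "d (Inr B) (Inl j) = d (Inl j) (Inr B)" using dsym pt_l[OF j] pt_r[OF B] by blast
  finally show ?thesis using jT by linarith
qed

lemma SC_bound:
  assumes B: "B < m"
  shows "SC (length P) d A \<le> 5 * real (m - t + 1) * SC (length P) d B"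
proof -
  let ?n = "length P" and ?k = "real (m - t + 1)"
  let ?x = "\<lambda>c. d (Inr B) (Inr c)"
  have xnn: "\<And>c. c < m \<Longrightarrow> 0 \<le> ?x c" using dnn pt_r B by blast
  have dB: "\<And>v. v < ?n \<Longrightarrow> 0 \<le> d (Inl v) (Inr B)" using dnn pt_l pt_r B by blast
  have "SC ?n d A = (\<Sum>v<?n. d (Inl v) (Inr A))" unfolding SC_def by simp
  also have "\<dots> \<le> (\<Sum>v<?n. \<Sum>c\<in>R v. d (Inl v) (Inr c))"
    by (rule sum_mono) (use agent_bound in auto)
  also have "\<dots> \<le> (\<Sum>v<?n. \<Sum>c\<in>R v. d (Inl v) (Inr B) + ?x c)"
  proof (rule sum_mono, rule sum_mono)
    fix v c assume v: "v \<in> {..<?n}" and c: "c \<in> R v"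
    then have "c < m" using R_sub[of v] by auto
    then show "d (Inl v) (Inr c) \<le> d (Inl v) (Inr B) + ?x c"
      using dtri pt_l v pt_r B by auto
  qed
  also have "\<dots> = (\<Sum>v<?n. real (card (R v)) * d (Inl v) (Inr B)) + (\<Sum>v<?n. \<Sum>c\<in>R v. ?x c)"
    by (simp add: sum.distrib)
  also have "(\<Sum>v<?n. real (card (R v)) * d (Inl v) (Inr B)) \<le> (\<Sum>v<?n. ?k * d (Inl v) (Inr B))"
  proof (rule sum_mono)
    fix v assume v: "v \<in> {..<?n}"
    have "real (card (R v)) \<le> ?k" using R_card[of v] v by simp
    then show "real (card (R v)) * d (Inl v) (Inr B) \<le> ?k * d (Inl v) (Inr B)"
      using dB[of v] v by (intro mult_right_mono) auto
  qed
  also have "(\<Sum>v<?n. ?k * d (Inl v) (Inr B)) = ?k * SC ?n d B"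
    unfolding SC_def by (simp add: sum_distrib_left)
  also have "(\<Sum>v<?n. \<Sum>c\<in>R v. ?x c) = (\<Sum>v<?n. \<Sum>c<m. if c \<in> R v then ?x c else 0)"
  proof (rule sum.cong[OF refl])
    fix v assume "v \<in> {..<?n}"
    then have "R v \<subseteq> {..<m}" using R_sub by auto
    then have "{..<m} \<inter> R v = R v" by blast
    then show "(\<Sum>c\<in>R v. ?x c) = (\<Sum>c<m. if c \<in> R v then ?x c else 0)"
      by (simp add: sum.If_cases)
  qed
  also have "\<dots> = (\<Sum>c<m. \<Sum>v<?n. if c \<in> R v then ?x c else 0)" by (rule sum.swap)
  also have "\<dots> = (\<Sum>c<m. real (\<Sum>v<?n. if c \<in> R v then 1 else 0) * ?x c)"
    by (auto simp: sum_distrib_right intro!: sum.cong)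
  also have "\<dots> \<le> (\<Sum>c<m. real (sc0 m t P c) * ?x c)"
  proof (rule sum_mono)
    fix c assume c: "c \<in> {..<m}"
    have "real (\<Sum>v<?n. if c \<in> R v then 1 else 0) \<le> real (sc0 m t P c)"
      using cnt_le[of c] by linarith
    then show "real (\<Sum>v<?n. if c \<in> R v then 1 else 0) * ?x c \<le> real (sc0 m t P c) * ?x c"
      using xnn[of c] c by (intro mult_right_mono) auto
  qed
  also have "\<dots> \<le> (\<Sum>c<m. 2 * ?k * (real (topc P c) * ?x c))"
  proof (rule sum_mono)
    fix c assume c: "c \<in> {..<m}"
    have "sc0 m t P c \<le> 2 * (m-t+1) * topc P c" unfolding sc0_def by auto
    then have "real (sc0 m t P c) \<le> real (2 * (m-t+1) * topc P c)" by (simp only: of_nat_le_iff)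
    then have "real (sc0 m t P c) \<le> 2 * ?k * real (topc P c)" by (simp only: of_nat_mult)
    then show "real (sc0 m t P c) * ?x c \<le> 2 * ?k * (real (topc P c) * ?x c)"
    proof -
      have "real (sc0 m t P c) * ?x c \<le> (2 * ?k * real (topc P c)) * ?x c"
        using xnn[of c] c \<open>real (sc0 m t P c) \<le> 2 * ?k * real (topc P c)\<close> by (intro mult_right_mono) auto
      then show ?thesis by (simp only: mult.assoc)
    qed
  qed
  also have "\<dots> = 2 * ?k * (\<Sum>j<?n. ?x (hd (P!j)))"
    by (simp add: sum_distrib_left[symmetric] sum_topc_real)
  also have "\<dots> \<le> 2 * ?k * (\<Sum>j<?n. 2 * d (Inl j) (Inr B))"
    by (rule mult_left_mono, rule sum_mono) (use top_close B in auto)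
  also have "\<dots> = 2 * ?k * (2 * SC ?n d B)" unfolding SC_def by (simp only: sum_distrib_left)
  also have "\<dots> = 4 * ?k * SC ?n d B" by simp
  finally show ?thesis by (simp add: algebra_simps)
qed

end


lemma metric_ratio:
  assumes pm: "pseudometric_on (points (length P) m) d" and mc: "metric_consistent_top m t P d"
  shows "ereal (SC (length P) d (rule m t P)) / ereal (Min ((\<lambda>X. SC (length P) d X) ` {..<m}))
         \<le> ereal (5 * real (m - t + 1))"
proof -
  from mc obtain Pf where fp: "full_profile m Pf" "extends_top t Pf P" "metric_consistent_full Pf d"
    unfolding metric_consistent_top_def by blast
  have fin: "finite ((\<lambda>X. SC (length P) d X) ` {..<m})" "(\<lambda>X. SC (length P) d X) ` {..<m} \<noteq> {}"
    using tm t1 by (auto simp: lessThan_empty_iff)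
  obtain B where B: "B < m" "Min ((\<lambda>X. SC (length P) d X) ` {..<m}) = SC (length P) d B"
    using Min_in[OF fin] by auto
  have bnd: "SC (length P) d A \<le> 5 * real (m - t + 1) * SC (length P) d B"
    using SC_bound[OF pm fp B(1)] .
  have nn: "\<And>X. X < m \<Longrightarrow> 0 \<le> SC (length P) d X"
    unfolding SC_def using dnn[OF pm fp] unfolding points_def by (auto intro!: sum_nonneg)
  show ?thesis
  proof (cases "SC (length P) d B = 0")
    case True
    then have "SC (length P) d A = 0" using bnd nn[OF A_lt] by simp
    then show ?thesis unfolding A_def by (simp add: B(2))
  next
    case False
    then have pos: "0 < SC (length P) d B" using nn[OF B(1)] by simp
    then have "SC (length P) d A / SC (length P) d B \<le> 5 * real (m - t + 1)"
      using bnd by (simp add: divide_le_eq)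
    then show ?thesis unfolding A_def using B(2) pos by (simp add: ereal_divide)
  qed
qed

context
  fixes Pf :: "nat list list" and u :: "nat \<Rightarrow> nat \<Rightarrow> real"
  assumes us: "unit_sum_utils (length P) m u"
    and fp: "full_profile m Pf" and ext: "extends_top t Pf P"
    and uc: "util_consistent_full Pf u"
begin

lemma uPf: "v < length P \<Longrightarrow> v < length Pf \<and> take t (Pf!v) = P!v \<and> is_ranking m (Pf!v)"
  using fp ext unfolding full_profile_def extends_top_def by auto

lemma u_top: assumes j: "j < length P" shows "1 / real m \<le> u j (hd (P!j))"
proof -
  let ?T = "hd (P!j)"
  have ne: "P!j \<noteq> []" using row[OF j] t1 by auto
  have pf: "take t (Pf!j) = P!j" "is_ranking m (Pf!j)" using uPf[OF j] by auto
  have le: "u j X \<le> u j ?T" if X: "X < m" for X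
  proof (cases "X = ?T")
    case True then show ?thesis by simp
  next
    case False
    then have "prefers (Pf!j) ?T X" using pref_top[OF pf(2) pf(1) ne X] by simp
    then show ?thesis using uc uPf[OF j] unfolding util_consistent_full_def by auto
  qed
  have "1 = (\<Sum>X<m. u j X)" using us j unfolding unit_sum_utils_def by auto
  also have "\<dots> \<le> (\<Sum>X<m. u j ?T)" by (rule sum_mono) (use le in auto)
  also have "\<dots> = real m * u j ?T" by simp
  finally show ?thesis using tm t1 by (simp add: divide_le_eq mult.commute)
qed

lemma u_le1: assumes i: "i < length P" "X < m" shows "u i X \<le> 1"
proof -
  have nn: "\<forall>Y<m. 0 \<le> u i Y" and s: "(\<Sum>Y<m. u i Y) = 1" using us i unfolding unit_sum_utils_def by auto
  have "u i X \<le> (\<Sum>Y<m. u i Y)" by (rule member_le_sum) (use nn i in auto)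
  then show ?thesis using s by simp
qed

lemma util_ratio:
  shows "ereal (Max ((\<lambda>X. SW (length P) u X) ` {..<m})) / ereal (SW (length P) u (rule m t P))
         \<le> ereal (2 * (real m)^2)"
proof -
  let ?n = "length P"
  have fin: "finite ((\<lambda>X. SW ?n u X) ` {..<m})" "(\<lambda>X. SW ?n u X) ` {..<m} \<noteq> {}"
    using tm t1 by (auto simp: lessThan_empty_iff)
  obtain X where X: "X < m" "Max ((\<lambda>X. SW ?n u X) ` {..<m}) = SW ?n u X"
    using Max_in[OF fin] by auto
  have Mx: "SW ?n u X \<le> real ?n"
  proof -
    have "SW ?n u X \<le> (\<Sum>i<?n. 1)" unfolding SW_def by (rule sum_mono) (use u_le1 X in auto)
    then show ?thesis by simp
  qed
  have unn: "\<And>i Y. i < ?n \<Longrightarrow> Y < m \<Longrightarrow> 0 \<le> u i Y" using us unfolding unit_sum_utils_def by auto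
  have "real (topc P A) / real m = (\<Sum>i<?n. if hd (P!i) = A then 1 / real m else 0)"
    unfolding topc_def by (auto simp add: sum_divide_distrib intro!: sum.cong)
  also have "\<dots> \<le> (\<Sum>i<?n. u i A)"
  proof (rule sum_mono)
    fix i assume i: "i \<in> {..<?n}"
    show "(if hd (P!i) = A then 1 / real m else 0) \<le> u i A"
      using u_top[of i] unn[of i A] A_lt i by (cases "hd (P!i) = A") auto
  qed
  finally have SWA: "real (topc P A) / real m \<le> SW ?n u A" unfolding SW_def .
  have H: "real ?n \<le> 2 * real m * real (topc P A)" using A_H unfolding inH_def
    by (metis of_nat_le_iff of_nat_mult of_nat_numeral)
  have mpos: "0 < real m" using tm t1 by simp
  have npos: "0 < real ?n" using n_pos by simp
  have low: "real ?n / (2 * (real m)^2) \<le> SW ?n u A"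
  proof -
    have "real ?n / (2 * (real m)^2) \<le> real (topc P A) / real m"
      using H mpos by (simp add: divide_le_eq power2_eq_square field_simps)
    then show ?thesis using SWA by linarith
  qed
  have SWpos: "0 < SW ?n u A" using low npos mpos by (smt (verit) divide_pos_pos zero_less_power)
  have "SW ?n u X / SW ?n u A \<le> real ?n / (real ?n / (2 * (real m)^2))"
    using Mx low SWpos npos mpos
    by (intro frac_le) (auto simp: SW_def intro!: sum_nonneg unn[OF _ X(1)])
  also have "\<dots> = 2 * (real m)^2" using npos by simp
  finally show ?thesis unfolding A_def using X(2) SWpos by (simp add: ereal_divide A_def)
qed

end

lemma rule_lt: "rule m t P < m" using A_lt unfolding A_def .

end


theorem mainTheorem9:
  shows "\<exists>C1 C2 :: real. 0 < C1 \<and> 0 < C2 \<and>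
    (\<forall>m t :: nat. 1 \<le> t \<and> t \<le> m \<longrightarrow>
      (\<exists>f. voting_rule m t f
         \<and> metric_distortion m t f \<le> ereal (C1 * real (m - t + 1))
         \<and> util_distortion m t f \<le> ereal (C2 * (real m)^2)))"
proof -
  have "\<exists>f. voting_rule m t f
         \<and> metric_distortion m t f \<le> ereal (5 * real (m - t + 1))
         \<and> util_distortion m t f \<le> ereal (2 * (real m)^2)" if mt: "1 \<le> t \<and> t \<le> m" for m t :: nat
  proof -
  show "\<exists>f. voting_rule m t f
         \<and> metric_distortion m t f \<le> ereal (5 * real (m - t + 1))
         \<and> util_distortion m t f \<le> ereal (2 * (real m)^2)"
  proof (intro exI[of _ "rule m t"] conjI)
    show "voting_rule m t (rule m t)"
      unfolding voting_rule_def using rule_lt mt by blast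
    show "metric_distortion m t (rule m t) \<le> ereal (5 * real (m - t + 1))"
      unfolding metric_distortion_def
    proof (rule SUP_least)
      fix Pd assume "Pd \<in> {(P, d). top_profile m t P \<and> pseudometric_on (points (length P) m) d
                        \<and> metric_consistent_top m t P d}"
      then obtain P d where Pd: "Pd = (P, d)" "top_profile m t P" "pseudometric_on (points (length P) m) d"
        "metric_consistent_top m t P d" by blast
      show "ereal (SC (length (fst Pd)) (snd Pd) (rule m t (fst Pd)))
        / ereal (Min ((\<lambda>X. SC (length (fst Pd)) (snd Pd) X) ` {..<m})) \<le> ereal (5 * real (m - t + 1))"
        using metric_ratio[OF Pd(2) _ _ Pd(3) Pd(4)] mt Pd(1) by simp
    qed
    show "util_distortion m t (rule m t) \<le> ereal (2 * (real m)^2)"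
      unfolding util_distortion_def
    proof (rule SUP_least)
      fix Pu assume "Pu \<in> {(P, u). top_profile m t P \<and> unit_sum_utils (length P) m u
                        \<and> util_consistent_top m t P u}"
      then obtain P u where Pu: "Pu = (P, u)" "top_profile m t P" "unit_sum_utils (length P) m u"
        "util_consistent_top m t P u" by blast
      from Pu(4) obtain Pf where Pf: "full_profile m Pf" "extends_top t Pf P" "util_consistent_full Pf u"
        unfolding util_consistent_top_def by blast
      show "ereal (Max ((\<lambda>X. SW (length (fst Pu)) (snd Pu) X) ` {..<m}))
        / ereal (SW (length (fst Pu)) (snd Pu) (rule m t (fst Pu))) \<le> ereal (2 * (real m)^2)"
        using util_ratio[OF Pu(2) _ _ Pu(3) Pf] mt Pu(1) by simp
    qed
  qed
  qed
  then show ?thesis by (intro exI[of _ 5] exI[of _ 2]) auto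
qed

end
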